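(* Under the hypotheses and notation of the setting below, let $0<r_*<1/4$. Then there exist positive constants $A_4,B_4$ such that for all $z$ with $0<|z|<r_*$, $$|\mathcal{R}_{\bar N}(z)|\le A_4\exp\Big\{-B_4\big(r_*/|z|\big)^{1/s}\Big\},\qquad \bar N=\big\lfloor B_4(r_*/|z|)^{1/s}\big\rfloor,$$ where $\lfloor x\rfloor$ is the integer part of $x$.
   Context: Setting: $F:D_1\to\mathbb{C}^n$ analytic, $D_1=\{z\in\mathbb{C}^n:|z_j|<1\}$, $F(z)=Az+f(z)$ with $f(0)=0$, $Df(0)=0$; $\hat H=\sum_{|\alpha|\ge1}h_\alpha z^\alpha$ is a formal power series with $\hat H(z)=z+O(|z|^2)$ formally satisfying $D\hat H\cdot F=A\hat H$ and Gevrey-$s$ ($s>0$): $|h_\alpha|\le A_1B_1^{-s|\alpha|}(|\alpha|!)^s$ for some $A_1,B_1>0$. $\mathcal{H}_N(z)=\sum_{1\le|\alpha|\le N}h_\alpha z^\alpha$ and $\mathcal{R}_N(z)=D\mathcal{H}_N(z)\cdot F(z)-A\mathcal{H}_N(z)$. $|z|=\max_j|z_j|$. *)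

theory Defs
  imports "HOL-Analysis.Analysis"
begin

text \<open>Vectors in C^n are modelled as complex^'n with a finite index type 'n.
  Multi-indices are functions 'n => nat.\<close>

definition mnorm :: "complex ^ 'n \<Rightarrow> real" where
  "mnorm z = Max (range (\<lambda>j. cmod (z $ j)))"

definition polydisc1 :: "(complex ^ 'n) set" where
  "polydisc1 = {z. \<forall>j. cmod (z $ j) < 1}"

definition mono_pow :: "complex ^ 'n \<Rightarrow> ('n \<Rightarrow> nat) \<Rightarrow> complex" where
  "mono_pow z \<alpha> = (\<Prod>j\<in>UNIV. (z $ j) ^ \<alpha> j)"

definition mi_deg :: "('n \<Rightarrow> nat) \<Rightarrow> nat" where
  "mi_deg \<alpha> = (\<Sum>j\<in>UNIV. \<alpha> j)"

definition unit_mi :: "'n \<Rightarrow> ('n \<Rightarrow> nat)" where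
  "unit_mi j = (\<lambda>k. if k = j then 1 else 0)"

definition trunc_series :: "(('n::finite \<Rightarrow> nat) \<Rightarrow> complex ^ 'n) \<Rightarrow> nat \<Rightarrow> complex ^ 'n \<Rightarrow> complex ^ 'n" where
  "trunc_series h N z = (\<Sum>\<alpha>\<in>{\<alpha>. 1 \<le> mi_deg \<alpha> \<and> mi_deg \<alpha> \<le> N}. mono_pow z \<alpha> *s h \<alpha>)"

definition partial_j :: "(complex ^ 'n \<Rightarrow> complex ^ 'n) \<Rightarrow> 'n \<Rightarrow> complex ^ 'n \<Rightarrow> complex ^ 'n" where
  "partial_j G j z = (\<chi> i. deriv (\<lambda>t. G (z + axis j t) $ i) 0)"

definition remainder :: "(('n::finite \<Rightarrow> nat) \<Rightarrow> complex ^ 'n) \<Rightarrow> (complex ^ 'n \<Rightarrow> complex ^ 'n)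
    \<Rightarrow> complex ^ 'n ^ 'n \<Rightarrow> nat \<Rightarrow> complex ^ 'n \<Rightarrow> complex ^ 'n" where
  "remainder h F A N z =
     (\<chi> i. \<Sum>j\<in>UNIV. partial_j (trunc_series h N) j z $ i * F z $ j) - A *v trunc_series h N z"

text \<open>Formal identity  D\<hat>H \<cdot> F = A \<hat>H, coefficientwise, where F = sum_beta c_beta z^beta.\<close>
definition formal_conj :: "(('n::finite \<Rightarrow> nat) \<Rightarrow> complex ^ 'n) \<Rightarrow> (('n \<Rightarrow> nat) \<Rightarrow> complex ^ 'n)
    \<Rightarrow> complex ^ 'n ^ 'n \<Rightarrow> bool" where
  "formal_conj h c A \<longleftrightarrow>
     (\<forall>\<gamma> i. (\<Sum>j\<in>UNIV. \<Sum>\<alpha>\<in>{\<alpha>. 1 \<le> \<alpha> j \<and> (\<forall>k. \<alpha> k \<le> \<gamma> k + unit_mi j k)}.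
               of_nat (\<alpha> j) * (h \<alpha> $ i) * (c (\<lambda>k. \<gamma> k + unit_mi j k - \<alpha> k) $ j))
            = (A *v h \<gamma>) $ i)"

end

theory Submission
  imports Defs "HOL-Library.FuncSet"
begin

lemma finite_deg_le: "finite {\<alpha>::'n::finite\<Rightarrow>nat. mi_deg \<alpha> \<le> N}"
proof -
  have "{\<alpha>::'n\<Rightarrow>nat. mi_deg \<alpha> \<le> N} \<subseteq> PiE UNIV (\<lambda>_. {..N})"
    unfolding mi_deg_def PiE_def Pi_def extensional_def
    using member_le_sum[of _ UNIV] by (auto intro: order_trans[OF member_le_sum])
  moreover have "finite (PiE (UNIV::'n set) (\<lambda>_. {..N}))" by (intro finite_PiE) auto
  ultimately show ?thesis by (rule finite_subset)
qed

lemma card_deg_le: "card {\<alpha>::'n::finite\<Rightarrow>nat. mi_deg \<alpha> \<le> N} \<le> (N+1) ^ CARD('n)"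
proof -
  have "{\<alpha>::'n\<Rightarrow>nat. mi_deg \<alpha> \<le> N} \<subseteq> PiE UNIV (\<lambda>_. {..N})"
    unfolding mi_deg_def PiE_def Pi_def extensional_def
    by (auto intro: order_trans[OF member_le_sum])
  moreover have "finite (PiE (UNIV::'n set) (\<lambda>_. {..N}))" by (intro finite_PiE) auto
  ultimately have "card {\<alpha>::'n\<Rightarrow>nat. mi_deg \<alpha> \<le> N} \<le> card (PiE (UNIV::'n set) (\<lambda>_. {..N}))"
    by (rule card_mono[rotated])
  also have "\<dots> = (N+1) ^ CARD('n)" by (simp add: card_PiE)
  finally show ?thesis .
qed

lemma mi_deg_add: "mi_deg (\<lambda>k::'n::finite. a k + b k) = mi_deg a + mi_deg b"
  unfolding mi_deg_def by (simp add: sum.distrib)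

lemma mi_deg_unit: "mi_deg (unit_mi (j::'n::finite)) = 1"
  unfolding mi_deg_def unit_mi_def by (simp add: sum.delta)

lemma mi_deg_zero_iff: "mi_deg (\<alpha>::'n::finite\<Rightarrow>nat) = 0 \<longleftrightarrow> \<alpha> = (\<lambda>_. 0)"
  unfolding mi_deg_def by (auto simp: fun_eq_iff)

lemma mi_deg_ge: "\<alpha> k \<le> mi_deg (\<alpha>::'n::finite\<Rightarrow>nat)"
  unfolding mi_deg_def by (rule member_le_sum) auto

lemma mi_deg_dm: fixes \<alpha> :: "'n::finite\<Rightarrow>nat" assumes "1 \<le> \<alpha> j"
  shows "mi_deg \<alpha> = mi_deg (\<lambda>k. \<alpha> k - unit_mi j k) + 1"
proof -
  have "\<alpha> = (\<lambda>k. (\<alpha> k - unit_mi j k) + unit_mi j k)"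
    using assms by (auto simp: unit_mi_def fun_eq_iff)
  hence "mi_deg \<alpha> = mi_deg (\<lambda>k. (\<alpha> k - unit_mi j k) + unit_mi j k)" by simp
  also have "\<dots> = mi_deg (\<lambda>k. \<alpha> k - unit_mi j k) + 1"
    by (subst mi_deg_add) (simp add: mi_deg_unit)
  finally show ?thesis .
qed

lemma mono_pow_add: "mono_pow z (\<lambda>k. a k + b k) = mono_pow z a * mono_pow z b"
  unfolding mono_pow_def by (simp add: power_add prod.distrib)

lemma mono_pow_zero: "mono_pow z (\<lambda>_. 0) = 1"
  unfolding mono_pow_def by simp

lemma mnorm_ge: "cmod (z $ k) \<le> mnorm z"
  unfolding mnorm_def by (rule Max_ge) auto

lemma mnorm_nonneg: "0 \<le> mnorm z"
  using mnorm_ge[of z] norm_ge_zero order_trans by blast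

lemma norm_mono_pow: "cmod (mono_pow z \<alpha>) \<le> mnorm z ^ mi_deg \<alpha>"
proof -
  have "cmod (mono_pow z \<alpha>) = (\<Prod>k\<in>UNIV. cmod (z $ k) ^ \<alpha> k)"
    unfolding mono_pow_def by (simp add: prod_norm[symmetric] norm_power)
  also have "\<dots> \<le> (\<Prod>k\<in>UNIV. mnorm z ^ \<alpha> k)"
    by (intro prod_mono conjI power_mono mnorm_ge) auto
  also have "\<dots> = mnorm z ^ mi_deg \<alpha>" unfolding mi_deg_def by (simp add: power_sum)
  finally show ?thesis .
qed

lemma mono_pow_const: "mono_pow (\<chi> k. w) \<alpha> = w ^ mi_deg \<alpha>"
  unfolding mono_pow_def mi_deg_def by (simp add: power_sum)

lemma mono_pow_split: "mono_pow (w::complex^'n::finite) \<alpha> = w$j ^ \<alpha> j * (\<Prod>k\<in>UNIV-{j}. w$k ^ \<alpha> k)"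
  unfolding mono_pow_def by (simp add: prod.remove)

lemma partial_trunc:
  fixes h :: "('n::finite \<Rightarrow> nat) \<Rightarrow> complex^'n"
  shows "partial_j (trunc_series h N) j z $ i =
    (\<Sum>\<alpha>\<in>{\<alpha>. 1 \<le> mi_deg \<alpha> \<and> mi_deg \<alpha> \<le> N}. of_nat (\<alpha> j) * mono_pow z (\<lambda>k. \<alpha> k - unit_mi j k) * h \<alpha> $ i)"
proof -
  let ?P = "{\<alpha>::'n\<Rightarrow>nat. 1 \<le> mi_deg \<alpha> \<and> mi_deg \<alpha> \<le> N}"
  define C where "C \<alpha> = (\<Prod>k\<in>UNIV-{j}. z$k ^ \<alpha> k)" for \<alpha> :: "'n \<Rightarrow> nat"
  have e1: "trunc_series h N (z + axis j t) $ i = (\<Sum>\<alpha>\<in>?P. (z$j + t)^(\<alpha> j) * C \<alpha> * h \<alpha> $ i)" for t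
  proof -
    have "mono_pow (z + axis j t) \<alpha> = (z$j + t)^(\<alpha> j) * C \<alpha>" for \<alpha>
    proof -
      have "(\<Prod>k\<in>UNIV-{j}. (z + axis j t)$k ^ \<alpha> k) = C \<alpha>"
        unfolding C_def by (intro prod.cong) (auto simp: axis_def)
      thus ?thesis by (subst mono_pow_split[of _ _ j]) (simp add: axis_def)
    qed
    thus ?thesis unfolding trunc_series_def by simp
  qed
  have d: "((\<lambda>t. trunc_series h N (z + axis j t) $ i) has_field_derivative
      (\<Sum>\<alpha>\<in>?P. of_nat (\<alpha> j) * z$j^(\<alpha> j - 1) * C \<alpha> * h \<alpha> $ i)) (at 0)"
    unfolding e1 by (rule DERIV_sum) (auto intro!: derivative_eq_intros)
  have e2: "mono_pow z (\<lambda>k. \<alpha> k - unit_mi j k) = z$j^(\<alpha> j - 1) * C \<alpha>" for \<alpha>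
    by (subst mono_pow_split[of _ _ j]) (auto simp: C_def unit_mi_def intro!: prod.cong)
  show ?thesis unfolding partial_j_def vec_lambda_beta using DERIV_imp_deriv[OF d]
    by (simp add: e2 mult.assoc)
qed

lemma deg_sub_add:
  fixes \<alpha> \<gamma> :: "'n::finite \<Rightarrow> nat"
  assumes "\<forall>k. \<alpha> k \<le> \<gamma> k + unit_mi j k"
  shows "mi_deg \<alpha> + mi_deg (\<lambda>k. \<gamma> k + unit_mi j k - \<alpha> k) = mi_deg \<gamma> + 1"
proof -
  have "(\<lambda>k. \<alpha> k + (\<gamma> k + unit_mi j k - \<alpha> k)) = (\<lambda>k. \<gamma> k + unit_mi j k)"
    using assms by (auto simp: fun_eq_iff)
  hence "mi_deg (\<lambda>k. \<alpha> k + (\<gamma> k + unit_mi j k - \<alpha> k)) = mi_deg (\<lambda>k. \<gamma> k + unit_mi j k)" by simp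
  thus ?thesis by (simp only: mi_deg_add mi_deg_unit)
qed

lemma deg_add_sub:
  fixes \<alpha> \<beta> :: "'n::finite \<Rightarrow> nat"
  assumes "1 \<le> \<alpha> j"
  shows "mi_deg (\<lambda>k. \<alpha> k + \<beta> k - unit_mi j k) + 1 = mi_deg \<alpha> + mi_deg \<beta>"
proof -
  have "(\<lambda>k. \<alpha> k + \<beta> k - unit_mi j k) = (\<lambda>k. (\<alpha> k - unit_mi j k) + \<beta> k)"
    using assms by (auto simp: fun_eq_iff unit_mi_def)
  hence "mi_deg (\<lambda>k. \<alpha> k + \<beta> k - unit_mi j k) = mi_deg (\<lambda>k. \<alpha> k - unit_mi j k) + mi_deg \<beta>"
    by (simp only: mi_deg_add)
  thus ?thesis using mi_deg_dm[of \<alpha> j, OF assms] by simp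
qed

lemma deg_pos: "(\<beta>::'n::finite\<Rightarrow>nat) \<noteq> (\<lambda>_. 0) \<Longrightarrow> 1 \<le> mi_deg \<beta>"
  using mi_deg_zero_iff[of \<beta>] by linarith

lemma reindex_j:
  fixes h c :: "('n::finite \<Rightarrow> nat) \<Rightarrow> complex^'n"
  assumes c0: "c (\<lambda>_. 0) = 0"
  shows "(\<Sum>\<alpha>\<in>{\<alpha>. 1 \<le> mi_deg \<alpha> \<and> mi_deg \<alpha> \<le> N}. \<Sum>\<beta>\<in>{\<beta>. mi_deg \<beta> \<le> N + 1 - mi_deg \<alpha>}.
            of_nat (\<alpha> j) * mono_pow z (\<lambda>k. \<alpha> k - unit_mi j k) * h \<alpha> $ i * (mono_pow z \<beta> * c \<beta> $ j))
       = (\<Sum>\<gamma>\<in>{\<alpha>. 1 \<le> mi_deg \<alpha> \<and> mi_deg \<alpha> \<le> N}. \<Sum>\<alpha>\<in>{\<alpha>. 1 \<le> \<alpha> j \<and> (\<forall>k. \<alpha> k \<le> \<gamma> k + unit_mi j k)}.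
            mono_pow z \<gamma> * (of_nat (\<alpha> j) * h \<alpha> $ i * c (\<lambda>k. \<gamma> k + unit_mi j k - \<alpha> k) $ j))"
    (is "?L = ?R")
proof -
  define P where "P = {\<alpha>::'n\<Rightarrow>nat. 1 \<le> mi_deg \<alpha> \<and> mi_deg \<alpha> \<le> N}"
  define B where "B \<alpha> = {\<beta>::'n\<Rightarrow>nat. mi_deg \<beta> \<le> N + 1 - mi_deg \<alpha>}" for \<alpha> :: "'n\<Rightarrow>nat"
  define Q where "Q \<gamma> = {\<alpha>::'n\<Rightarrow>nat. 1 \<le> \<alpha> j \<and> (\<forall>k. \<alpha> k \<le> \<gamma> k + unit_mi j k)}" for \<gamma> :: "'n\<Rightarrow>nat"
  define g where "g = (\<lambda>(\<alpha>,\<beta>). of_nat (\<alpha> j) * mono_pow z (\<lambda>k. \<alpha> k - unit_mi j k) * h \<alpha> $ i * (mono_pow z \<beta> * c \<beta> $ j))"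
  define hh where "hh = (\<lambda>(\<gamma>,\<alpha>). mono_pow z \<gamma> * (of_nat (\<alpha> j) * h \<alpha> $ i * c (\<lambda>k. \<gamma> k + unit_mi j k - \<alpha> k) $ j))"
  have finP: "finite P" unfolding P_def by (rule finite_subset[OF _ finite_deg_le[of N]]) auto
  have finB: "finite (B \<alpha>)" for \<alpha> unfolding B_def by (rule finite_deg_le)
  have finQ: "finite (Q \<gamma>)" for \<gamma>
  proof (rule finite_subset[OF _ finite_deg_le[of "mi_deg \<gamma> + 1"]])
    show "Q \<gamma> \<subseteq> {\<alpha>. mi_deg \<alpha> \<le> mi_deg \<gamma> + 1}"
    proof
      fix \<alpha> assume "\<alpha> \<in> Q \<gamma>"
      hence "\<forall>k. \<alpha> k \<le> \<gamma> k + unit_mi j k" unfolding Q_def by auto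
      hence "mi_deg \<alpha> + mi_deg (\<lambda>k. \<gamma> k + unit_mi j k - \<alpha> k) = mi_deg \<gamma> + 1" by (rule deg_sub_add)
      thus "\<alpha> \<in> {\<alpha>. mi_deg \<alpha> \<le> mi_deg \<gamma> + 1}" by simp
    qed
  qed
  have L: "?L = sum g (Sigma P B)"
    unfolding P_def[symmetric] B_def[symmetric] g_def
    by (subst sum.Sigma[OF finP]) (auto simp: finB)
  have R: "?R = sum hh (Sigma P Q)"
    unfolding P_def[symmetric] Q_def[symmetric] hh_def
    by (subst sum.Sigma[OF finP]) (auto simp: finQ)
  define S' where "S' = {(\<alpha>,\<beta>). (\<alpha>,\<beta>) \<in> Sigma P B \<and> (\<beta> = (\<lambda>_. 0) \<or> \<alpha> j = 0)}"
  define T' where "T' = {(\<gamma>,\<alpha>). (\<gamma>,\<alpha>) \<in> Sigma P Q \<and> \<alpha> = (\<lambda>k. \<gamma> k + unit_mi j k)}"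
  define ii where "ii = (\<lambda>(\<gamma>::'n\<Rightarrow>nat,\<alpha>::'n\<Rightarrow>nat). (\<alpha>, \<lambda>k. \<gamma> k + unit_mi j k - \<alpha> k))"
  define jj where "jj = (\<lambda>(\<alpha>::'n\<Rightarrow>nat,\<beta>::'n\<Rightarrow>nat). (\<lambda>k. \<alpha> k + \<beta> k - unit_mi j k, \<alpha>))"
  have finS: "finite (Sigma P B)" using finP finB by auto
  have finT: "finite (Sigma P Q)" using finP finQ by auto
  have "sum g (Sigma P B) = sum hh (Sigma P Q)"
  proof (rule sum.reindex_bij_witness_not_neutral[of S' T' _ ii jj])
    show "finite S'" by (rule finite_subset[OF _ finS]) (auto simp: S'_def)
    show "finite T'" by (rule finite_subset[OF _ finT]) (auto simp: T'_def)
  next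
    fix a assume a: "a \<in> Sigma P B - S'"
    obtain \<alpha> \<beta> where ab: "a = (\<alpha>,\<beta>)" by force
    have aj: "1 \<le> \<alpha> j" and b0: "\<beta> \<noteq> (\<lambda>_. 0)" and aP: "\<alpha> \<in> P" and bB: "\<beta> \<in> B \<alpha>"
      using a ab by (auto simp: S'_def)
    have ge: "unit_mi j k \<le> \<alpha> k + \<beta> k" for k using aj by (auto simp: unit_mi_def)
    show "ii (jj a) = a" using ge unfolding ab ii_def jj_def by (auto simp: fun_eq_iff)
    have d1: "1 \<le> mi_deg \<beta>" using deg_pos[OF b0] .
    have d2: "mi_deg (\<lambda>k. \<alpha> k + \<beta> k - unit_mi j k) + 1 = mi_deg \<alpha> + mi_deg \<beta>" using deg_add_sub[of \<alpha> j \<beta>, OF aj] .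
    have "(\<lambda>k. \<alpha> k + \<beta> k - unit_mi j k) \<in> P" using d1 d2 aP bB by (auto simp: P_def B_def)
    moreover have "\<alpha> \<in> Q (\<lambda>k. \<alpha> k + \<beta> k - unit_mi j k)" using aj ge by (auto simp: Q_def)
    moreover have "\<alpha> \<noteq> (\<lambda>k. (\<alpha> k + \<beta> k - unit_mi j k) + unit_mi j k)"
    proof
      assume "\<alpha> = (\<lambda>k. (\<alpha> k + \<beta> k - unit_mi j k) + unit_mi j k)"
      hence "\<alpha> k = \<alpha> k + \<beta> k" for k using ge[of k] by (metis le_add_diff_inverse2)
      hence "\<beta> = (\<lambda>_. 0)" by (auto simp: fun_eq_iff)
      with b0 show False by simp
    qed
    ultimately show "jj a \<in> Sigma P Q - T'" unfolding ab jj_def T'_def by auto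
  next
    fix b assume b: "b \<in> Sigma P Q - T'"
    obtain \<gamma> \<alpha> where ga: "b = (\<gamma>,\<alpha>)" by force
    have gP: "\<gamma> \<in> P" and aj: "1 \<le> \<alpha> j" and le: "\<forall>k. \<alpha> k \<le> \<gamma> k + unit_mi j k"
      and ne: "\<alpha> \<noteq> (\<lambda>k. \<gamma> k + unit_mi j k)"
      using b ga by (auto simp: T'_def Q_def)
    show "jj (ii b) = b" using le unfolding ga ii_def jj_def by (auto simp: fun_eq_iff)
    have b0: "(\<lambda>k. \<gamma> k + unit_mi j k - \<alpha> k) \<noteq> (\<lambda>_. 0)"
    proof
      assume "(\<lambda>k. \<gamma> k + unit_mi j k - \<alpha> k) = (\<lambda>_. 0)"
      hence "\<gamma> k + unit_mi j k - \<alpha> k = 0" for k by meson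
      hence "\<alpha> k = \<gamma> k + unit_mi j k" for k using le by (metis diff_is_0_eq le_antisym)
      with ne show False by auto
    qed
    have d1: "1 \<le> mi_deg (\<lambda>k. \<gamma> k + unit_mi j k - \<alpha> k)" using deg_pos[OF b0] .
    have d2: "mi_deg \<alpha> + mi_deg (\<lambda>k. \<gamma> k + unit_mi j k - \<alpha> k) = mi_deg \<gamma> + 1" using deg_sub_add[OF le] .
    have d3: "1 \<le> mi_deg \<alpha>" using aj mi_deg_ge[of \<alpha> j] by linarith
    have "\<alpha> \<in> P" using d1 d2 d3 gP by (auto simp: P_def)
    moreover have "(\<lambda>k. \<gamma> k + unit_mi j k - \<alpha> k) \<in> B \<alpha>" using d2 gP by (auto simp: P_def B_def)
    ultimately show "ii b \<in> Sigma P B - S'" using b0 aj unfolding ga ii_def S'_def by auto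
  next
    fix a assume "a \<in> S'"
    then obtain \<alpha> \<beta> where ab: "a = (\<alpha>,\<beta>)" and "\<beta> = (\<lambda>_. 0) \<or> \<alpha> j = 0" by (auto simp: S'_def)
    thus "g a = 0" unfolding g_def using c0 by auto
  next
    fix b assume "b \<in> T'"
    then obtain \<gamma> \<alpha> where ga: "b = (\<gamma>,\<alpha>)" and e: "\<alpha> = (\<lambda>k. \<gamma> k + unit_mi j k)" by (auto simp: T'_def)
    have "(\<lambda>k. \<gamma> k + unit_mi j k - \<alpha> k) = (\<lambda>_. 0)" using e by auto
    thus "hh b = 0" unfolding hh_def ga using c0 by simp
  next
    fix a assume "a \<in> Sigma P B"
    obtain \<alpha> \<beta> where ab: "a = (\<alpha>,\<beta>)" by force
    show "hh (jj a) = g a"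
    proof (cases "\<alpha> j = 0")
      case True
      thus ?thesis unfolding ab hh_def g_def jj_def by simp
    next
      case False
      hence ge: "unit_mi j k \<le> \<alpha> k" for k by (auto simp: unit_mi_def)
      have e1: "(\<lambda>k. (\<alpha> k + \<beta> k - unit_mi j k) + unit_mi j k - \<alpha> k) = \<beta>"
      proof
        fix k show "(\<alpha> k + \<beta> k - unit_mi j k) + unit_mi j k - \<alpha> k = \<beta> k" using ge[of k] by arith
      qed
      have e2: "(\<lambda>k. \<alpha> k + \<beta> k - unit_mi j k) = (\<lambda>k. (\<alpha> k - unit_mi j k) + \<beta> k)"
        using ge by (auto simp: fun_eq_iff)
      show ?thesis unfolding ab hh_def g_def jj_def
        by (simp only: prod.case e1) (simp add: e2 mono_pow_add mult_ac)
    qed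
  qed
  thus ?thesis using L R by simp
qed

lemma rem_identity:
  fixes h c :: "('n::finite \<Rightarrow> nat) \<Rightarrow> complex^'n" and F :: "complex^'n \<Rightarrow> complex^'n"
    and A :: "complex^'n^'n"
  assumes formal: "formal_conj h c A" and c0: "c (\<lambda>_. 0) = 0"
  shows "remainder h F A N z $ i = (\<Sum>j\<in>UNIV. \<Sum>\<alpha>\<in>{\<alpha>. 1 \<le> mi_deg \<alpha> \<and> mi_deg \<alpha> \<le> N}.
     of_nat (\<alpha> j) * mono_pow z (\<lambda>k. \<alpha> k - unit_mi j k) * h \<alpha> $ i *
     (F z $ j - (\<Sum>\<beta>\<in>{\<beta>. mi_deg \<beta> \<le> N + 1 - mi_deg \<alpha>}. mono_pow z \<beta> * c \<beta> $ j)))"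
proof -
  define P where "P = {\<alpha>::'n\<Rightarrow>nat. 1 \<le> mi_deg \<alpha> \<and> mi_deg \<alpha> \<le> N}"
  define a where "a j \<alpha> = of_nat (\<alpha> j) * mono_pow z (\<lambda>k. \<alpha> k - unit_mi j k) * h \<alpha> $ i" for j :: 'n and \<alpha> :: "'n\<Rightarrow>nat"
  define Lo where "Lo j \<alpha> = (\<Sum>\<beta>\<in>{\<beta>. mi_deg \<beta> \<le> N + 1 - mi_deg \<alpha>}. mono_pow z \<beta> * c \<beta> $ j)" for j :: 'n and \<alpha> :: "'n\<Rightarrow>nat"
  have r1: "remainder h F A N z $ i = (\<Sum>j\<in>UNIV. (\<Sum>\<alpha>\<in>P. a j \<alpha>) * F z $ j) - (A *v trunc_series h N z) $ i"
    unfolding remainder_def a_def P_def by (simp add: partial_trunc)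
  have r2: "(A *v trunc_series h N z) $ i = (\<Sum>\<gamma>\<in>P. mono_pow z \<gamma> * (A *v h \<gamma>) $ i)"
  proof -
    have "(A *v trunc_series h N z) $ i = (\<Sum>k\<in>UNIV. A$i$k * (\<Sum>\<gamma>\<in>P. mono_pow z \<gamma> * h \<gamma> $ k))"
      unfolding matrix_vector_mult_def trunc_series_def P_def by simp
    also have "\<dots> = (\<Sum>k\<in>UNIV. \<Sum>\<gamma>\<in>P. mono_pow z \<gamma> * (A$i$k * h \<gamma> $ k))"
      unfolding sum_distrib_left by (intro sum.cong refl) (simp add: mult_ac)
    also have "\<dots> = (\<Sum>\<gamma>\<in>P. \<Sum>k\<in>UNIV. mono_pow z \<gamma> * (A$i$k * h \<gamma> $ k))"
      by (rule sum.swap)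
    also have "\<dots> = (\<Sum>\<gamma>\<in>P. mono_pow z \<gamma> * (A *v h \<gamma>) $ i)"
      unfolding matrix_vector_mult_def by (simp add: sum_distrib_left)
    finally show ?thesis .
  qed
  have r3: "(A *v h \<gamma>) $ i = (\<Sum>j\<in>UNIV. \<Sum>\<alpha>\<in>{\<alpha>. 1 \<le> \<alpha> j \<and> (\<forall>k. \<alpha> k \<le> \<gamma> k + unit_mi j k)}.
               of_nat (\<alpha> j) * (h \<alpha> $ i) * (c (\<lambda>k. \<gamma> k + unit_mi j k - \<alpha> k) $ j))" for \<gamma>
    using formal unfolding formal_conj_def by simp
  have r4: "(\<Sum>\<gamma>\<in>P. mono_pow z \<gamma> * (A *v h \<gamma>) $ i) = (\<Sum>j\<in>UNIV. \<Sum>\<alpha>\<in>P. a j \<alpha> * Lo j \<alpha>)"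
  proof -
    have "(\<Sum>\<gamma>\<in>P. mono_pow z \<gamma> * (A *v h \<gamma>) $ i) = (\<Sum>\<gamma>\<in>P. \<Sum>j\<in>UNIV. \<Sum>\<alpha>\<in>{\<alpha>. 1 \<le> \<alpha> j \<and> (\<forall>k. \<alpha> k \<le> \<gamma> k + unit_mi j k)}.
               mono_pow z \<gamma> * (of_nat (\<alpha> j) * (h \<alpha> $ i) * (c (\<lambda>k. \<gamma> k + unit_mi j k - \<alpha> k) $ j)))"
      unfolding r3 by (simp add: sum_distrib_left)
    also have "\<dots> = (\<Sum>j\<in>UNIV. \<Sum>\<gamma>\<in>P. \<Sum>\<alpha>\<in>{\<alpha>. 1 \<le> \<alpha> j \<and> (\<forall>k. \<alpha> k \<le> \<gamma> k + unit_mi j k)}.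
               mono_pow z \<gamma> * (of_nat (\<alpha> j) * (h \<alpha> $ i) * (c (\<lambda>k. \<gamma> k + unit_mi j k - \<alpha> k) $ j)))"
      by (rule sum.swap)
    also have "\<dots> = (\<Sum>j\<in>UNIV. \<Sum>\<alpha>\<in>P. \<Sum>\<beta>\<in>{\<beta>. mi_deg \<beta> \<le> N + 1 - mi_deg \<alpha>}.
            of_nat (\<alpha> j) * mono_pow z (\<lambda>k. \<alpha> k - unit_mi j k) * h \<alpha> $ i * (mono_pow z \<beta> * c \<beta> $ j))"
      unfolding P_def by (intro sum.cong refl reindex_j[where c=c, OF c0, symmetric])
    also have "\<dots> = (\<Sum>j\<in>UNIV. \<Sum>\<alpha>\<in>P. a j \<alpha> * Lo j \<alpha>)"
      unfolding a_def Lo_def by (simp add: sum_distrib_left)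
    finally show ?thesis .
  qed
  have r5: "(\<Sum>j\<in>UNIV. (\<Sum>\<alpha>\<in>P. a j \<alpha>) * F z $ j) =
      (\<Sum>j\<in>UNIV. \<Sum>\<alpha>\<in>P. a j \<alpha> * (F z $ j - Lo j \<alpha>)) + (\<Sum>j\<in>UNIV. \<Sum>\<alpha>\<in>P. a j \<alpha> * Lo j \<alpha>)"
  proof -
    have "(\<Sum>\<alpha>\<in>P. a j \<alpha>) * F z $ j = (\<Sum>\<alpha>\<in>P. a j \<alpha> * (F z $ j - Lo j \<alpha>) + a j \<alpha> * Lo j \<alpha>)" for j
      unfolding sum_distrib_right by (intro sum.cong refl) (simp add: right_diff_distrib)
    also have "\<dots> j = (\<Sum>\<alpha>\<in>P. a j \<alpha> * (F z $ j - Lo j \<alpha>)) + (\<Sum>\<alpha>\<in>P. a j \<alpha> * Lo j \<alpha>)" for j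
      by (rule sum.distrib)
    finally show ?thesis by (simp only: sum.distrib)
  qed
  have "remainder h F A N z $ i = (\<Sum>j\<in>UNIV. \<Sum>\<alpha>\<in>P. a j \<alpha> * (F z $ j - Lo j \<alpha>))"
    unfolding r1 r2 r4 r5 by simp
  thus ?thesis by (simp only: a_def Lo_def P_def)
qed

lemma tail_bound:
  fixes c :: "('n::finite \<Rightarrow> nat) \<Rightarrow> complex^'n" and z :: "complex^'n" and Fz Fw :: "complex^'n"
  assumes hz: "((\<lambda>\<beta>. mono_pow z \<beta> *s c \<beta>) has_sum Fz) UNIV"
    and hw: "((\<lambda>\<beta>. mono_pow (\<chi> k. (1/2::complex)) \<beta> *s c \<beta>) has_sum Fw) UNIV"
    and z2: "2 * mnorm z \<le> 1"
  shows "cmod (Fz $ j - (\<Sum>\<beta>\<in>{\<beta>. mi_deg \<beta> \<le> L}. mono_pow z \<beta> * c \<beta> $ j))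
      \<le> (2 * mnorm z)^(L+1) * (\<Sum>\<^sub>\<infinity>\<beta>. (1/2)^mi_deg \<beta> * cmod (c \<beta> $ j))"
proof -
  let ?B = "{\<beta>::'n\<Rightarrow>nat. mi_deg \<beta> \<le> L}"
  define f where "f \<beta> = mono_pow z \<beta> * c \<beta> $ j" for \<beta>
  define g where "g \<beta> = (1/2::real)^mi_deg \<beta> * cmod (c \<beta> $ j)" for \<beta>
  have hz': "(f has_sum Fz $ j) UNIV"
    using has_sum_bounded_linear[OF bounded_linear_vec_nth hz, of j] unfolding f_def by simp
  have hw': "((\<lambda>\<beta>. (1/2::complex)^mi_deg \<beta> * c \<beta> $ j) has_sum Fw $ j) UNIV"
    using has_sum_bounded_linear[OF bounded_linear_vec_nth hw, of j] by (simp add: mono_pow_const)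
  have gs: "g summable_on UNIV"
  proof -
    have s1: "(\<lambda>\<beta>. (1/2::complex)^mi_deg \<beta> * c \<beta> $ j) summable_on UNIV"
      by (rule has_sum_imp_summable[OF hw'])
    have s2: "(\<lambda>\<beta>. norm ((1/2::complex)^mi_deg \<beta> * c \<beta> $ j)) summable_on UNIV"
      by (rule summable_on_iff_abs_summable_on_complex[THEN iffD1, OF s1])
    have e: "(\<lambda>\<beta>. norm ((1/2::complex)^mi_deg \<beta> * c \<beta> $ j)) = g"
    proof
      fix \<beta> show "norm ((1/2::complex)^mi_deg \<beta> * c \<beta> $ j) = g \<beta>"
        unfolding g_def norm_mult norm_power by simp
    qed
    show ?thesis using s2 unfolding e .
  qed
  have fin: "finite ?B" by (rule finite_deg_le)
  have hd: "(f has_sum (Fz $ j - sum f ?B)) (UNIV - ?B)"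
    by (rule has_sum_Diff[OF hz' has_sum_finite[OF fin]]) auto
  hence eq: "Fz $ j - sum f ?B = infsum f (UNIV - ?B)" by (simp add: infsumI)
  have fas: "(\<lambda>\<beta>. norm (f \<beta>)) summable_on (UNIV - ?B)"
    by (rule summable_on_iff_abs_summable_on_complex[THEN iffD1, OF has_sum_imp_summable[OF hd]])
  have m0: "0 \<le> mnorm z" by (rule mnorm_nonneg)
  have pw: "norm (f \<beta>) \<le> (2 * mnorm z)^(L+1) * g \<beta>" if "\<beta> \<in> UNIV - ?B" for \<beta>
  proof -
    have d: "L + 1 \<le> mi_deg \<beta>" using that by auto
    have a1: "norm (f \<beta>) \<le> mnorm z ^ mi_deg \<beta> * cmod (c \<beta> $ j)"
      unfolding f_def norm_mult by (intro mult_right_mono norm_mono_pow) auto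
    have a2: "mnorm z ^ mi_deg \<beta> \<le> (2 * mnorm z)^(L+1) * (1/2)^mi_deg \<beta>"
    proof -
      have e: "(2 * mnorm z * (1/2))^mi_deg \<beta> = (2 * mnorm z)^mi_deg \<beta> * (1/2)^mi_deg \<beta>"
        by (rule power_mult_distrib)
      have "mnorm z ^ mi_deg \<beta> = (2 * mnorm z)^mi_deg \<beta> * (1/2)^mi_deg \<beta>"
        using e by simp
      also have "\<dots> \<le> (2 * mnorm z)^(L+1) * (1/2)^mi_deg \<beta>"
        by (intro mult_right_mono power_decreasing[OF d]) (use z2 m0 in auto)
      finally show ?thesis .
    qed
    have a3: "mnorm z ^ mi_deg \<beta> * cmod (c \<beta> $ j) \<le> (2 * mnorm z)^(L+1) * (1/2)^mi_deg \<beta> * cmod (c \<beta> $ j)"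
      by (rule mult_right_mono[OF a2 norm_ge_zero])
    have "norm (f \<beta>) \<le> (2 * mnorm z)^(L+1) * (1/2)^mi_deg \<beta> * cmod (c \<beta> $ j)"
      by (rule order_trans[OF a1 a3])
    thus ?thesis unfolding g_def by (simp only: mult.assoc)
  qed
  have g0: "0 \<le> g \<beta>" for \<beta> unfolding g_def by simp
  have "cmod (Fz $ j - sum f ?B) \<le> infsum (\<lambda>\<beta>. norm (f \<beta>)) (UNIV - ?B)"
    unfolding eq by (rule norm_infsum_bound[OF fas])
  also have "\<dots> \<le> infsum (\<lambda>\<beta>. (2 * mnorm z)^(L+1) * g \<beta>) (UNIV - ?B)"
    by (rule infsum_mono[OF fas _ pw]) (intro summable_on_cmult_right summable_on_subset[OF gs], auto)
  also have "\<dots> = (2 * mnorm z)^(L+1) * infsum g (UNIV - ?B)" by (rule infsum_cmult_right')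
  also have "\<dots> \<le> (2 * mnorm z)^(L+1) * infsum g UNIV"
    by (intro mult_left_mono infsum_mono_neutral summable_on_subset[OF gs]) (use g0 m0 in auto)
  finally show ?thesis unfolding g_def f_def by simp
qed

lemma mnorm_le: "(\<And>i. cmod (x$i) \<le> b) \<Longrightarrow> mnorm x \<le> b"
  unfolding mnorm_def by (rule Max.boundedI) auto

lemma nat_poly_exp: "(N+1)^n * N \<le> (2^(n+1))^N" for N n :: nat
proof -
  have a: "N + 1 \<le> 2^N" using less_exp[of N] by (simp add: Suc_le_eq)
  have "(N+1)^n * N \<le> (N+1)^n * (N+1)" by simp
  also have "\<dots> = (N+1)^(n+1)" by simp
  also have "\<dots> \<le> (2^N)^(n+1)" by (rule power_mono[OF a]) simp
  also have "\<dots> = (2^(n+1))^N" by (simp add: power_mult[symmetric] mult.commute)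
  finally show ?thesis .
qed

lemma rem_bound:
  fixes h c :: "('n::finite \<Rightarrow> nat) \<Rightarrow> complex^'n" and F :: "complex^'n \<Rightarrow> complex^'n"
    and A :: "complex^'n^'n" and s A\<^sub>1 B\<^sub>1 E K :: real
  assumes formal: "formal_conj h c A" and c0: "c (\<lambda>_. 0) = 0"
    and hz: "((\<lambda>\<beta>. mono_pow z \<beta> *s c \<beta>) has_sum F z) UNIV"
    and hw: "((\<lambda>\<beta>. mono_pow (\<chi> k. (1/2::complex)) \<beta> *s c \<beta>) has_sum F (\<chi> k. 1/2)) UNIV"
    and z2: "2 * mnorm z \<le> 1"
    and s_pos: "s > 0" and A1_pos: "A\<^sub>1 > 0" and B1_pos: "B\<^sub>1 > 0"
    and gevrey: "\<forall>\<alpha>. mnorm (h \<alpha>) \<le> A\<^sub>1 * B\<^sub>1 powr (- s * real (mi_deg \<alpha>)) * (fact (mi_deg \<alpha>)) powr s"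
    and E_def: "E = max 2 (B\<^sub>1 powr (-s))"
    and K_def: "K = (\<Sum>j\<in>UNIV. (\<Sum>\<^sub>\<infinity>\<beta>. (1/2)^mi_deg \<beta> * cmod (c \<beta> $ j)))"
  shows "mnorm (remainder h F A N z) \<le>
     (A\<^sub>1 * E^2 * K) * (2^(CARD('n)+1) * E)^N * (fact N) powr s * mnorm z ^ (N+1)"
proof -
  define m where "m = mnorm z"
  define P where "P = {\<alpha>::'n\<Rightarrow>nat. 1 \<le> mi_deg \<alpha> \<and> mi_deg \<alpha> \<le> N}"
  define Kj where "Kj j = (\<Sum>\<^sub>\<infinity>\<beta>. (1/2::real)^mi_deg \<beta> * cmod (c \<beta> $ j))" for j :: 'n
  define fN where "fN = (fact N :: real) powr s"
  define a where "a i j \<alpha> = of_nat (\<alpha> j) * mono_pow z (\<lambda>k. \<alpha> k - unit_mi j k) * h \<alpha> $ i" for i j :: 'n and \<alpha> :: "'n\<Rightarrow>nat"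
  define T where "T j \<alpha> = F z $ j - (\<Sum>\<beta>\<in>{\<beta>. mi_deg \<beta> \<le> N + 1 - mi_deg \<alpha>}. mono_pow z \<beta> * c \<beta> $ j)" for j :: 'n and \<alpha> :: "'n\<Rightarrow>nat"
  have m0: "0 \<le> m" unfolding m_def by (rule mnorm_nonneg)
  have Kj0: "0 \<le> Kj j" for j unfolding Kj_def by (rule infsum_nonneg) simp
  have fN0: "0 \<le> fN" unfolding fN_def by simp
  have E2: "2 \<le> E" unfolding E_def by simp
  have E0: "0 \<le> E" using E2 by simp
  have tb: "cmod (a i j \<alpha> * T j \<alpha>) \<le> real N * A\<^sub>1 * fN * E^(N+2) * m^(N+1) * Kj j"
    if aP: "\<alpha> \<in> P" for i j \<alpha>
  proof (cases "\<alpha> j = 0")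
    case True
    thus ?thesis unfolding a_def using A1_pos fN0 E0 m0 Kj0 by simp
  next
    case False
    hence aj: "1 \<le> \<alpha> j" by simp
    have dd: "mi_deg \<alpha> = mi_deg (\<lambda>k. \<alpha> k - unit_mi j k) + 1" by (rule mi_deg_dm[of \<alpha> j, OF aj])
    have d1: "1 \<le> mi_deg \<alpha>" and dN: "mi_deg \<alpha> \<le> N" using aP by (auto simp: P_def)
    have h1: "cmod (mono_pow z (\<lambda>k. \<alpha> k - unit_mi j k)) \<le> m^(mi_deg \<alpha> - 1)"
      using norm_mono_pow[of z "\<lambda>k. \<alpha> k - unit_mi j k"] dd unfolding m_def by simp
    have h2: "cmod (h \<alpha> $ i) \<le> A\<^sub>1 * E^mi_deg \<alpha> * fN"
    proof -
      have p1: "cmod (h \<alpha> $ i) \<le> A\<^sub>1 * B\<^sub>1 powr (- s * real (mi_deg \<alpha>)) * (fact (mi_deg \<alpha>)) powr s"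
        using mnorm_ge[of "h \<alpha>" i] gevrey by (meson order_trans)
      have p2: "B\<^sub>1 powr (- s * real (mi_deg \<alpha>)) = (B\<^sub>1 powr (-s))^mi_deg \<alpha>"
      proof -
        have "(B\<^sub>1 powr (-s))^mi_deg \<alpha> = (B\<^sub>1 powr (-s)) powr (real (mi_deg \<alpha>))"
          using B1_pos by (simp add: powr_realpow)
        also have "\<dots> = B\<^sub>1 powr (- s * real (mi_deg \<alpha>))" by (simp add: powr_powr)
        finally show ?thesis by simp
      qed
      have p3: "(B\<^sub>1 powr (-s))^mi_deg \<alpha> \<le> E^mi_deg \<alpha>"
        by (rule power_mono) (auto simp: E_def)
      have p4: "(fact (mi_deg \<alpha>) :: real) powr s \<le> fN"
        unfolding fN_def using s_pos by (intro powr_mono2 fact_mono dN) auto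
      have "A\<^sub>1 * B\<^sub>1 powr (- s * real (mi_deg \<alpha>)) * (fact (mi_deg \<alpha>)) powr s \<le> A\<^sub>1 * E^mi_deg \<alpha> * fN"
        unfolding p2 using A1_pos E0 p3 p4 by (intro mult_mono mult_left_mono) auto
      thus ?thesis using p1 by linarith
    qed
    have h3: "real (\<alpha> j) \<le> real N" using mi_deg_ge[of \<alpha> j] dN by simp
    have h4: "cmod (T j \<alpha>) \<le> (2*m)^(N+2-mi_deg \<alpha>) * Kj j"
    proof -
      have "cmod (T j \<alpha>) \<le> (2 * m)^((N + 1 - mi_deg \<alpha>)+1) * Kj j"
        unfolding T_def Kj_def m_def by (rule tail_bound[OF hz hw z2])
      moreover have "(N + 1 - mi_deg \<alpha>)+1 = N+2-mi_deg \<alpha>" using dN by simp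
      ultimately show ?thesis by metis
    qed
    define d where "d = mi_deg \<alpha>"
    have X: "cmod (a i j \<alpha> * T j \<alpha>) = real (\<alpha> j) * cmod (mono_pow z (\<lambda>k. \<alpha> k - unit_mi j k)) * cmod (h \<alpha> $ i) * cmod (T j \<alpha>)"
      unfolding a_def by (simp add: norm_mult)
    have Y: "real (\<alpha> j) * cmod (mono_pow z (\<lambda>k. \<alpha> k - unit_mi j k)) * cmod (h \<alpha> $ i) * cmod (T j \<alpha>)
        \<le> real N * m^(d - 1) * (A\<^sub>1 * E^d * fN) * ((2*m)^(N+2-d) * Kj j)"
      unfolding d_def by (intro mult_mono h1 h2 h3 h4) (use m0 A1_pos E0 fN0 in auto)
    have Z: "real N * m^(d - 1) * (A\<^sub>1 * E^d * fN) * ((2*m)^(N+2-d) * Kj j)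
        = (real N * A\<^sub>1 * fN * Kj j) * ((E^d * 2^(N+2-d)) * (m^(d - 1) * m^(N+2-d)))"
      by (simp add: power_mult_distrib mult_ac)
    have pm: "m^(d - 1) * m^(N+2-d) = m^(N+1)"
    proof -
      have "(d - 1) + (N+2-d) = N+1" using d1 dN unfolding d_def by simp
      thus ?thesis by (metis power_add)
    qed
    have pe: "E^d * 2^(N+2-d) \<le> E^(N+2)"
    proof -
      have "E^d * 2^(N+2-d) \<le> E^d * E^(N+2-d)"
        by (intro mult_left_mono power_mono E2) (use E0 in auto)
      moreover have "d + (N+2-d) = N+2" using dN unfolding d_def by simp
      hence "E^d * E^(N+2-d) = E^(N+2)" by (metis power_add)
      ultimately show ?thesis by simp
    qed
    have P0: "0 \<le> real N * A\<^sub>1 * fN * Kj j" using A1_pos fN0 Kj0 by simp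
    have W: "(real N * A\<^sub>1 * fN * Kj j) * ((E^d * 2^(N+2-d)) * m^(N+1))
        \<le> (real N * A\<^sub>1 * fN * Kj j) * (E^(N+2) * m^(N+1))"
      by (intro mult_left_mono mult_right_mono pe P0) (use m0 in auto)
    have V: "(real N * A\<^sub>1 * fN * Kj j) * (E^(N+2) * m^(N+1)) = real N * A\<^sub>1 * fN * E^(N+2) * m^(N+1) * Kj j"
      by (simp add: mult_ac)
    have Y': "cmod (a i j \<alpha> * T j \<alpha>) \<le> (real N * A\<^sub>1 * fN * Kj j) * ((E^d * 2^(N+2-d)) * m^(N+1))"
      using Y unfolding X[symmetric] Z pm .
    show ?thesis using order_trans[OF Y' W] unfolding V .
  qed
  have finP: "finite P" unfolding P_def by (rule finite_subset[OF _ finite_deg_le[of N]]) auto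
  have cardP: "card P \<le> (N+1)^CARD('n)"
    unfolding P_def by (rule order_trans[OF card_mono[OF finite_deg_le[of N]] card_deg_le]) auto
  have comp: "cmod (remainder h F A N z $ i) \<le> (A\<^sub>1 * E^2 * K) * (2^(CARD('n)+1) * E)^N * fN * m ^ (N+1)" for i
  proof -
    have eqR: "remainder h F A N z $ i = (\<Sum>j\<in>UNIV. \<Sum>\<alpha>\<in>P. a i j \<alpha> * T j \<alpha>)"
      unfolding rem_identity[OF formal c0] a_def T_def P_def by simp
    have "cmod (remainder h F A N z $ i) \<le> (\<Sum>j\<in>UNIV. cmod (\<Sum>\<alpha>\<in>P. a i j \<alpha> * T j \<alpha>))"
      unfolding eqR by (rule norm_sum)
    also have "\<dots> \<le> (\<Sum>j\<in>UNIV. \<Sum>\<alpha>\<in>P. cmod (a i j \<alpha> * T j \<alpha>))"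
      by (intro sum_mono norm_sum)
    also have "\<dots> \<le> (\<Sum>j\<in>UNIV. \<Sum>\<alpha>\<in>P. real N * A\<^sub>1 * fN * E^(N+2) * m^(N+1) * Kj j)"
      by (intro sum_mono tb)
    also have "\<dots> = real (card P) * real N * A\<^sub>1 * fN * E^(N+2) * m^(N+1) * K"
      unfolding K_def Kj_def by (simp add: sum_distrib_left mult_ac)
    also have "\<dots> \<le> real ((N+1)^CARD('n) * N) * A\<^sub>1 * fN * E^(N+2) * m^(N+1) * K"
    proof -
      have c1: "real (card P) \<le> real ((N+1)^CARD('n))" using cardP by (simp only: of_nat_le_iff)
      have "real (card P) * real N \<le> real ((N+1)^CARD('n)) * real N" by (rule mult_right_mono[OF c1]) simp
      hence "real (card P) * real N \<le> real ((N+1)^CARD('n) * N)" by (simp only: of_nat_mult)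
      moreover have "0 \<le> K" unfolding K_def using Kj0 Kj_def by (simp add: sum_nonneg)
      ultimately show ?thesis using A1_pos fN0 E0 m0
        by (intro mult_right_mono) auto
    qed
    also have "\<dots> \<le> real ((2^(CARD('n)+1))^N) * A\<^sub>1 * fN * E^(N+2) * m^(N+1) * K"
    proof -
      have "real ((N+1)^CARD('n) * N) \<le> real ((2^(CARD('n)+1))^N)"
        using nat_poly_exp by (simp only: of_nat_le_iff)
      moreover have "0 \<le> K" unfolding K_def using Kj0 Kj_def by (simp add: sum_nonneg)
      ultimately show ?thesis using A1_pos fN0 E0 m0
        by (intro mult_right_mono) auto
    qed
    also have "\<dots> = (A\<^sub>1 * E^2 * K) * (2^(CARD('n)+1) * E)^N * fN * m ^ (N+1)"
      by (simp add: power_mult_distrib power_add mult_ac power2_eq_square)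
    finally show ?thesis .
  qed
  show ?thesis unfolding m_def[symmetric] fN_def[symmetric] by (rule mnorm_le) (rule comp)
qed

lemma final_arith:
  fixes M D s m r B4 :: real and N :: nat
  assumes M0: "0 \<le> M" and D0: "0 < D" and s0: "0 < s" and m0: "0 < m" and mr: "m < r" and m1: "m \<le> 1"
    and B4_def: "B4 = (1 / (exp 1 * D * r)) powr (1/s)"
    and N_def: "N = nat \<lfloor>B4 * (r/m) powr (1/s)\<rfloor>"
  shows "M * D^N * (fact N) powr s * m^(N+1) \<le> (M+1) * exp 1 * exp (- B4 * (r/m) powr (1/s))"
proof -
  define x where "x = B4 * (r/m) powr (1/s)"
  have r0: "0 < r" using m0 mr by simp
  have B40: "0 < B4" unfolding B4_def using D0 r0 by simp
  have x0: "0 < x" unfolding x_def using B40 m0 r0 by simp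
  have Nx: "real N \<le> x" unfolding N_def x_def[symmetric] using x0 by linarith
  have xN: "x < real N + 1" unfolding N_def x_def[symmetric] using x0 by linarith
  have f1: "(fact N :: real) powr s \<le> (real N powr s)^N"
  proof (cases "N = 0")
    case True thus ?thesis by simp
  next
    case False
    have "(fact N :: real) powr s \<le> (real N ^ N) powr s"
      using fact_le_power[of N] s0 by (intro powr_mono2) auto
    also have "(real N ^ N) powr s = (real N powr s)^N"
      using False by (simp add: powr_power powr_realpow[symmetric] powr_powr mult.commute)
    finally show ?thesis .
  qed
  have xs: "x powr s = (1 / (exp 1 * D * r)) * (r/m)"
  proof -
    have "x powr s = B4 powr s * ((r/m) powr (1/s)) powr s"
      unfolding x_def using B40 m0 r0 by (simp add: powr_mult)
    also have "B4 powr s = 1 / (exp 1 * D * r)" unfolding B4_def using s0 D0 r0 by (simp add: powr_powr)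
    also have "((r/m) powr (1/s)) powr s = r/m" using s0 m0 r0 by (simp add: powr_powr)
    finally show ?thesis .
  qed
  have Ns: "real N powr s \<le> x powr s" using Nx s0 by (intro powr_mono2) auto
  have q: "D * real N powr s * m \<le> exp (-1)"
  proof -
    have "D * real N powr s * m \<le> D * x powr s * m" by (intro mult_right_mono mult_left_mono Ns) (use D0 m0 in auto)
    also have "\<dots> = exp (-1)" unfolding xs using D0 m0 r0 by (simp add: exp_minus field_simps)
    finally show ?thesis .
  qed
  have "M * D^N * (fact N) powr s * m^(N+1) \<le> M * D^N * (real N powr s)^N * m^N"
  proof -
    have "m^(N+1) \<le> m^N" using m0 m1 by (simp add: power_decreasing)
    hence "(fact N) powr s * m^(N+1) \<le> (real N powr s)^N * m^N"
      using f1 m0 by (intro mult_mono) auto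
    from mult_left_mono[OF this, of "M * D^N"] show ?thesis using M0 D0 by (simp add: mult.assoc)
  qed
  also have "\<dots> = M * (D * real N powr s * m)^N" by (simp add: power_mult_distrib mult_ac)
  also have "\<dots> \<le> M * (exp (-1))^N"
    using q M0 D0 m0 by (intro mult_left_mono power_mono) auto
  also have "M * (exp (-1::real))^N \<le> (M+1) * exp 1 * exp (- x)"
  proof -
    have "(exp (-1::real))^N = exp (- real N)" by (simp add: exp_of_nat_mult[symmetric])
    also have "exp (- real N) \<le> exp 1 * exp (-x)" using xN by (simp add: exp_add[symmetric])
    finally have "(exp (-1::real))^N \<le> exp 1 * exp (-x)" .
    hence "M * (exp (-1::real))^N \<le> M * (exp 1 * exp (-x))" by (rule mult_left_mono[OF _ M0])
    also have "M * (exp 1 * exp (-x)) \<le> (M+1) * exp 1 * exp (- x)" by simp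
    finally show ?thesis .
  qed
  finally show ?thesis unfolding x_def by simp
qed

theorem mainTheorem3:
  fixes F f :: "complex ^ ('n::finite) \<Rightarrow> complex ^ 'n"
    and A :: "complex ^ 'n ^ 'n"
    and c h :: "('n \<Rightarrow> nat) \<Rightarrow> complex ^ 'n"
    and s A\<^sub>1 B\<^sub>1 r :: real
  assumes analytic: "\<forall>z\<in>polydisc1. ((\<lambda>\<beta>. mono_pow z \<beta> *s c \<beta>) has_sum F z) UNIV"
    and F_decomp: "\<forall>z\<in>polydisc1. F z = A *v z + f z"
    and f0: "f 0 = 0"
    and Df0: "(f has_derivative (\<lambda>_. 0)) (at 0)"
    and h0: "h (\<lambda>_. 0) = 0"
    and h_lin: "\<forall>j. h (unit_mi j) = axis j 1"
    and formal: "formal_conj h c A"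
    and s_pos: "s > 0"
    and A1_pos: "A\<^sub>1 > 0" and B1_pos: "B\<^sub>1 > 0"
    and gevrey: "\<forall>\<alpha>. mnorm (h \<alpha>) \<le> A\<^sub>1 * B\<^sub>1 powr (- s * real (mi_deg \<alpha>)) * (fact (mi_deg \<alpha>)) powr s"
    and r_pos: "0 < r" and r_lt: "r < 1/4"
  shows "\<exists>A\<^sub>4 B\<^sub>4. A\<^sub>4 > 0 \<and> B\<^sub>4 > 0 \<and>
    (\<forall>z. 0 < mnorm z \<and> mnorm z < r \<longrightarrow>
       mnorm (remainder h F A (nat \<lfloor>B\<^sub>4 * (r / mnorm z) powr (1 / s)\<rfloor>) z)
         \<le> A\<^sub>4 * exp (- B\<^sub>4 * (r / mnorm z) powr (1 / s)))"
proof -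
  have w_in: "(\<chi> k. (1/2::complex)) \<in> polydisc1" unfolding polydisc1_def by simp
  have hw: "((\<lambda>\<beta>. mono_pow (\<chi> k. (1/2::complex)) \<beta> *s c \<beta>) has_sum F (\<chi> k. 1/2)) UNIV"
    using analytic w_in by blast
  have c0: "c (\<lambda>_. 0) = 0"
  proof -
    have z_in: "(0::complex^'n) \<in> polydisc1" unfolding polydisc1_def by simp
    have h1: "((\<lambda>\<beta>. mono_pow 0 \<beta> *s c \<beta>) has_sum F 0) UNIV" using analytic z_in by blast
    have mp: "mono_pow (0::complex^'n) \<beta> *s c \<beta> = (if \<beta> = (\<lambda>_. 0) then c \<beta> else 0)" for \<beta>
    proof (cases "\<beta> = (\<lambda>_. 0)")
      case True thus ?thesis by (simp add: mono_pow_zero)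
    next
      case False
      then obtain k where "\<beta> k \<noteq> 0" by auto
      hence "mono_pow (0::complex^'n) \<beta> = 0" unfolding mono_pow_def
        by (intro prod_zero) (auto intro!: bexI[of _ k])
      thus ?thesis using False by simp
    qed
    have h2: "((\<lambda>\<beta>. mono_pow 0 \<beta> *s c \<beta>) has_sum c (\<lambda>_. 0)) UNIV"
      unfolding mp by (rule has_sum_finite_neutralI[of "{\<lambda>_. 0}"]) auto
    have "F 0 = c (\<lambda>_. 0)" using has_sum_unique[OF h1 h2] .
    moreover have "F 0 = 0" using F_decomp z_in f0 by simp
    ultimately show ?thesis by simp
  qed
  define E where "E = max 2 (B\<^sub>1 powr (-s))"
  define K where "K = (\<Sum>j\<in>UNIV. (\<Sum>\<^sub>\<infinity>\<beta>. (1/2::real)^mi_deg \<beta> * cmod (c \<beta> $ j)))"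
  define D where "D = 2^(CARD('n)+1) * E"
  define M where "M = A\<^sub>1 * E^2 * K"
  define B4 where "B4 = (1 / (exp 1 * D * r)) powr (1/s)"
  define A4 where "A4 = (M+1) * exp 1"
  have K0: "0 \<le> K" unfolding K_def by (intro sum_nonneg infsum_nonneg) auto
  have E0: "0 < E" unfolding E_def by simp
  have D0: "0 < D" unfolding D_def using E0 by simp
  have M0: "0 \<le> M" unfolding M_def using A1_pos K0 by simp
  show ?thesis
  proof (intro exI conjI allI impI)
    show "0 < A4" unfolding A4_def using M0 by (simp add: add_nonneg_pos)
    show "0 < B4" unfolding B4_def using D0 r_pos by simp
    fix z :: "complex^'n" assume zz: "0 < mnorm z \<and> mnorm z < r"
    have z_in: "z \<in> polydisc1" unfolding polydisc1_def
    proof (intro CollectI allI)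
      fix j
      have "cmod (z $ j) \<le> mnorm z" by (rule mnorm_ge)
      thus "cmod (z $ j) < 1" using zz r_lt by linarith
    qed
    have hz: "((\<lambda>\<beta>. mono_pow z \<beta> *s c \<beta>) has_sum F z) UNIV" using analytic z_in by blast
    have z2: "2 * mnorm z \<le> 1" using zz r_lt by simp
    define N where "N = nat \<lfloor>B4 * (r / mnorm z) powr (1 / s)\<rfloor>"
    have "mnorm (remainder h F A N z) \<le> M * D^N * (fact N) powr s * mnorm z ^ (N+1)"
      unfolding M_def D_def
      by (rule rem_bound[OF formal c0 hz hw z2 s_pos A1_pos B1_pos gevrey E_def K_def])
    also have "\<dots> \<le> A4 * exp (- B4 * (r / mnorm z) powr (1 / s))"
      unfolding A4_def using final_arith[OF M0 D0 s_pos _ _ _ B4_def N_def] zz r_lt by simp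
    finally show "mnorm (remainder h F A (nat \<lfloor>B4 * (r / mnorm z) powr (1 / s)\<rfloor>) z)
         \<le> A4 * exp (- B4 * (r / mnorm z) powr (1 / s))" unfolding N_def .
  qed
qed

end
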